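(* Let $X$ be a $T_1$ space and $\mathcal{P}$ an ideal of closed subsets of $X$. Then every set $Z_\mathcal{P}(f)=\{x\in X\colon f(x)=0\}$ with $f\in C(X)_\mathcal{P}$ is closed in $X$ if and only if $C(X)_\mathcal{P}=C(X)$.
   Context: An ideal of closed subsets of $X$ is a family $\mathcal{P}$ of closed subsets closed under finite unions and under passing to closed subsets. $D_f$ is the set of discontinuity points of $f\in\mathbb{R}^X$; $C(X)_\mathcal{P}=\{f\in\mathbb{R}^X\colon\overline{D_f}\in\mathcal{P}\}$; $C(X)$ is the ring of continuous real-valued functions on $X$. *)

theory Defs
  imports "HOL-Analysis.Analysis"
begin

text \<open>The space X is the whole of a type 'a of class t1_space.\<close>

definition discont_points :: "('a::topological_space \<Rightarrow> real) \<Rightarrow> 'a set" where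
  "discont_points f = {x. \<not> (f \<longlongrightarrow> f x) (at x)}"

definition closed_ideal :: "'a::topological_space set set \<Rightarrow> bool" where
  "closed_ideal P \<longleftrightarrow>
     (\<forall>A\<in>P. closed A) \<and> {} \<in> P \<and>
     (\<forall>A\<in>P. \<forall>B\<in>P. A \<union> B \<in> P) \<and>
     (\<forall>A\<in>P. \<forall>B. closed B \<and> B \<subseteq> A \<longrightarrow> B \<in> P)"

definition C_P :: "'a::topological_space set set \<Rightarrow> ('a \<Rightarrow> real) set" where
  "C_P P = {f. closure (discont_points f) \<in> P}"

definition C_X :: "('a::topological_space \<Rightarrow> real) set" where
  "C_X = {f. continuous_on UNIV f}"

definition zero_set :: "('a \<Rightarrow> real) \<Rightarrow> 'a set" where
  "zero_set f = {x. f x = 0}"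

end

theory Submission
  imports Defs
begin

lemma cont_iff: "continuous_on UNIV f \<longleftrightarrow> discont_points f = {}"
  by (auto simp: discont_points_def continuous_on_def)

theorem theorem2p6:
  fixes P :: "'a::t1_space set set"
  assumes "closed_ideal P"
  shows "(\<forall>f\<in>C_P P. closed (zero_set f)) \<longleftrightarrow> C_P P = (C_X :: ('a \<Rightarrow> real) set)"
proof -
  have sub: "C_X \<subseteq> C_P P"
    using assms by (auto simp: C_X_def C_P_def cont_iff closed_ideal_def)
  show ?thesis
  proof
    assume H: "\<forall>f\<in>C_P P. closed (zero_set f)"
    have "C_P P \<subseteq> C_X"
    proof
      fix f :: "'a \<Rightarrow> real" assume f: "f \<in> C_P P"
      show "f \<in> C_X"
      proof (rule ccontr)
        assume "f \<notin> C_X"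
        then obtain x where x: "x \<in> discont_points f"
          by (auto simp: C_X_def cont_iff)
        have "closure (discont_points f) \<in> P" using f by (simp add: C_P_def)
        moreover have "x \<in> closure (discont_points f)" using x closure_subset by blast
        ultimately have sx: "{x} \<in> P" using assms unfolding closed_ideal_def
          by (meson closed_singleton empty_subsetI insert_subset)
        define g :: "'a \<Rightarrow> real" where "g = (\<lambda>y. if y = x then 1 else 0)"
        have "discont_points g \<subseteq> {x}"
        proof
          fix y assume y: "y \<in> discont_points g"
          show "y \<in> {x}"
          proof (rule ccontr)
            assume "y \<notin> {x}"
            then have "eventually (\<lambda>z. z \<in> - {x}) (nhds y)"
              by (intro eventually_nhds_in_open) auto
            then have "eventually (\<lambda>z. g z = g y) (at y)"
              using \<open>y \<notin> {x}\<close> unfolding g_def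
              by (auto simp: eventually_at_filter elim: eventually_mono)
            then have "(g \<longlongrightarrow> g y) (at y)"
              by (simp add: tendsto_eventually)
            then show False using y by (simp add: discont_points_def)
          qed
        qed
        then have "closure (discont_points g) \<subseteq> {x}"
          by (simp add: closure_minimal)
        then have "closure (discont_points g) \<in> P"
          using sx assms unfolding closed_ideal_def by blast
        then have "closed (zero_set g)" using H by (simp add: C_P_def)
        moreover have "zero_set g = - {x}" by (auto simp: zero_set_def g_def)
        ultimately have "open {x}" by (simp add: closed_def)
        then have "at x = bot" by (simp add: at_eq_bot_iff)
        then show False using x by (simp add: discont_points_def)
      qed
    qed
    then show "C_P P = C_X" using sub by blast
  next
    assume "C_P P = C_X"
    then show "\<forall>f\<in>C_P P. closed (zero_set f)"
      by (auto simp: C_X_def zero_set_def intro: closed_Collect_eq continuous_on_const)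
  qed
qed

end
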